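(* Let $\mathcal{L}$ be a set of lines of $\mathsf{PG}(7,q^3)$ satisfying (Pt): every point of $\mathsf{PG}(7,q^3)$ is incident with $0$ or $q+1$ elements of $\mathcal{L}$; (Pl): every plane contains $0$, $1$ or $q+1$ elements of $\mathcal{L}$; (Sd): every solid contains $0,1,q+1$ or $2q+1$ elements of $\mathcal{L}$; and (4d'): every $4$-dimensional subspace contains at most $q^2+2q+1$ elements of $\mathcal{L}$. Then no five lines of $\mathcal{L}$ form a pentagon.
   Context: A pentagon is a set of five lines $L_1,\dots,L_5$ such that $L_i$ meets $L_{i+1}$ (indices mod $5$) and the five intersection points are pairwise distinct. *)

theory Defs
  imports "HOL-Analysis.Analysis"
begin

text \<open>PG(7,F) modelled via the vector space F^8 over a field F: a projective
  k-dimensional subspace is a linear subspace of F^8 of vector dimension k+1.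
  Points: k=0, lines: k=1, planes: k=2, solids: k=3, 4-spaces: k=4.\<close>

definition proj_sub :: "nat \<Rightarrow> ('a::field ^ 8) set \<Rightarrow> bool" where
  "proj_sub k S \<longleftrightarrow> vec.subspace S \<and> vec.dim S = k + 1"

definition n_in :: "('a::field ^ 8) set set \<Rightarrow> ('a ^ 8) set \<Rightarrow> nat" where
  "n_in Ls S = card {L \<in> Ls. L \<subseteq> S}"

definition pentagon :: "(nat \<Rightarrow> ('a::field ^ 8) set) \<Rightarrow> bool" where
  "pentagon L \<longleftrightarrow>
     (\<forall>i<5. proj_sub 1 (L i)) \<and>
     (\<forall>i<5. proj_sub 0 (L i \<inter> L (Suc i mod 5))) \<and>
     inj_on (\<lambda>i. L i \<inter> L (Suc i mod 5)) {..<5}"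

end

theory Submission imports Defs begin

definition J :: "('a::field ^ 8) set \<Rightarrow> ('a ^ 8) set \<Rightarrow> ('a ^ 8) set" where
  "J A B = vec.span (A \<union> B)"

definition lns :: "('a::field ^ 8) set set \<Rightarrow> ('a ^ 8) set \<Rightarrow> ('a ^ 8) set set" where
  "lns Ls S = {L \<in> Ls. L \<subseteq> S}"

definition pen :: "('a::field ^ 8) set set \<Rightarrow> ('a ^ 8) set \<Rightarrow> ('a ^ 8) set set" where
  "pen Ls P = {L \<in> Ls. P \<subseteq> L}"

lemma n_in_lns: "n_in Ls S = card (lns Ls S)"
  by (simp add: n_in_def lns_def)

lemma J_sub[simp]: "vec.subspace (J A B)"
  by (simp add: J_def)

lemma J_ge1: "A \<subseteq> J A B" and J_ge2: "B \<subseteq> J A B"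
  by (auto simp: J_def intro: vec.span_base)

lemma J_min: "A \<subseteq> C \<Longrightarrow> B \<subseteq> C \<Longrightarrow> vec.subspace C \<Longrightarrow> J A B \<subseteq> C"
  unfolding J_def by (rule vec.span_minimal) auto

lemma J_dim:
  assumes "vec.subspace A" "vec.subspace B"
  shows "vec.dim (J A B) + vec.dim (A \<inter> B) = vec.dim A + vec.dim B"
proof -
  have "J A B = {x + y |x y. x \<in> A \<and> y \<in> B}"
  proof -
    have "vec.span A = A" "vec.span B = B" using assms by (simp_all add: vec.span_eq_iff)
    then show ?thesis unfolding J_def vec.span_Un by (simp del: vec.span_eq_iff)
  qed
  then show ?thesis using vec.dim_sums_Int[OF assms] by simp
qed

lemma eqdim: "vec.subspace X \<Longrightarrow> vec.subspace Y \<Longrightarrow> X \<subseteq> Y \<Longrightarrow> vec.dim Y \<le> vec.dim X \<Longrightarrow> X = Y"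
  using vec.subspace_dim_equal by blast

lemma sub_lt:
  assumes "vec.subspace X" "vec.subspace Y" "\<not> X \<subseteq> Y"
  shows "vec.dim (X \<inter> Y) < vec.dim X"
proof (rule ccontr)
  assume "\<not> ?thesis"
  then have "X \<inter> Y = X"
    using eqdim[of "X \<inter> Y" X] assms vec.subspace_inter by auto
  then show False using assms by auto
qed

lemma dim_mono': "X \<subseteq> Y \<Longrightarrow> vec.dim X \<le> vec.dim Y"
  by (rule vec.dim_subset)

lemma J_dim_disj:
  assumes "proj_sub m A" "proj_sub n B" "vec.dim (A \<inter> B) = 0" "k = m + n + 1"
  shows "proj_sub k (J A B)"
proof -
  have a: "vec.subspace A" "vec.dim A = m + 1" using assms(1) unfolding proj_sub_def by blast+
  have b: "vec.subspace B" "vec.dim B = n + 1" using assms(2) unfolding proj_sub_def by blast+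
  have "vec.dim (J A B) + vec.dim (A \<inter> B) = vec.dim A + vec.dim B" using J_dim a b by blast
  then have "vec.dim (J A B) = m + n + 1 + 1" using a b assms(3) by linarith
  then show ?thesis unfolding proj_sub_def using assms(4) by simp
qed

lemma pt_sub_eq: "proj_sub 0 P \<Longrightarrow> proj_sub k Q \<Longrightarrow> k = 0 \<Longrightarrow> P \<subseteq> Q \<Longrightarrow> P = Q"
  unfolding proj_sub_def using eqdim by force

lemma same_dim_eq: "proj_sub k P \<Longrightarrow> proj_sub k Q \<Longrightarrow> P \<subseteq> Q \<Longrightarrow> P = Q"
  unfolding proj_sub_def using eqdim by force

lemma line_pts:
  assumes K: "proj_sub 1 K" and P: "proj_sub 0 P" and Q: "proj_sub 0 Q" and "P \<noteq> Q"
    and "P \<subseteq> K" "Q \<subseteq> K"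
  shows "K = J P Q"
proof -
  have "\<not> P \<subseteq> Q" using same_dim_eq[OF P Q] assms by auto
  then have "vec.dim (P \<inter> Q) < vec.dim P" using sub_lt[of P Q] P Q by (auto simp: proj_sub_def)
  moreover have "vec.dim (J P Q) + vec.dim (P \<inter> Q) = vec.dim P + vec.dim Q" using J_dim[of P Q] P Q by (auto simp: proj_sub_def)
  ultimately have "vec.dim (J P Q) = 2" using P Q unfolding proj_sub_def by linarith
  moreover have "J P Q \<subseteq> K" using assms J_min[of P K Q] by (auto simp: proj_sub_def)
  ultimately show ?thesis using eqdim[of "J P Q" K] K by (auto simp: proj_sub_def)
qed

lemma plane_of:
  assumes "proj_sub 1 K1" "proj_sub 1 K2" "K1 \<noteq> K2" "proj_sub 0 P" "P \<subseteq> K1" "P \<subseteq> K2"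
  shows "proj_sub 2 (J K1 K2)"
proof -
  have "\<not> K1 \<subseteq> K2" using same_dim_eq assms by blast
  then have "vec.dim (K1 \<inter> K2) < 2" using sub_lt[of K1 K2] assms by (auto simp: proj_sub_def)
  moreover have "vec.dim P \<le> vec.dim (K1 \<inter> K2)" using assms dim_mono'[of P "K1 \<inter> K2"] by auto
  ultimately have "vec.dim (K1 \<inter> K2) = 1" using assms by (auto simp: proj_sub_def)
  then show ?thesis using J_dim[of K1 K2] assms by (auto simp: proj_sub_def)
qed

lemma two_planes:
  assumes A: "proj_sub 2 A" and B: "proj_sub 2 B" and "A \<noteq> B" and S: "proj_sub 3 S"
    and "A \<subseteq> S" "B \<subseteq> S" and K: "proj_sub 1 K" "K \<subseteq> A" "K \<subseteq> B"
    and X: "proj_sub 1 X" "X \<subseteq> A" "X \<subseteq> B"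
  shows "X = K"
proof -
  have "\<not> B \<subseteq> A" using same_dim_eq[OF B A] assms by auto
  then have "vec.dim (B \<inter> A) < 3" using sub_lt[of B A] A B by (auto simp: proj_sub_def)
  moreover have "vec.dim (J A B) \<le> 4" using dim_mono'[of "J A B" S] J_min[of A S B] assms
    by (auto simp: proj_sub_def)
  moreover have "vec.dim (J A B) + vec.dim (A \<inter> B) = 6" using J_dim[of A B] A B by (auto simp: proj_sub_def)
  ultimately have d: "vec.dim (A \<inter> B) = 2" by (simp add: Int_commute)
  have "K = A \<inter> B" using eqdim[of K "A \<inter> B"] d K A B vec.subspace_inter by (auto simp: proj_sub_def)
  moreover have "X = A \<inter> B" using eqdim[of X "A \<inter> B"] d X A B vec.subspace_inter by (auto simp: proj_sub_def)
  ultimately show ?thesis by simp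
qed

lemma fin[simp]: "finite (X :: ('a::{field,finite} ^ 8) set set)"
  by simp

lemma q_ge2:
  assumes "CARD('a::{field,finite}) = q ^ 3" shows "q \<ge> 2"
proof -
  have "card {0::'a, 1} \<le> CARD('a)" by (rule card_mono) auto
  then have "2 \<le> q ^ 3" using assms by simp
  show ?thesis
  proof (rule ccontr)
    assume "\<not> q \<ge> 2"
    then have "q = 0 \<or> q = 1" by auto
    then show False using \<open>2 \<le> q ^ 3\<close> by auto
  qed
qed

lemma plane_cnt:
  fixes Ls :: "('a::{field,finite} ^ 8) set set"
  assumes Pl: "\<forall>S. proj_sub 2 S \<longrightarrow> n_in Ls S \<in> {0, 1, q + 1}"
    and X: "proj_sub 2 X" and K: "K1 \<in> Ls" "K2 \<in> Ls" "K1 \<noteq> K2" "K1 \<subseteq> X" "K2 \<subseteq> X"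
  shows "card (lns Ls X) = q + 1"
proof -
  have "card {K1, K2} \<le> card (lns Ls X)" by (rule card_mono) (use K in \<open>auto simp: lns_def\<close>)
  then have "2 \<le> card (lns Ls X)" using K by simp
  moreover have "card (lns Ls X) \<in> {0, 1, q + 1}" using Pl X n_in_lns by metis
  ultimately show ?thesis by auto
qed

lemma flat:
  fixes Ls :: "('a::{field,finite} ^ 8) set set"
  assumes q: "q \<ge> 2" and lines: "\<forall>L\<in>Ls. proj_sub 1 L"
    and Pl: "\<forall>S. proj_sub 2 S \<longrightarrow> n_in Ls S \<in> {0, 1, q + 1}"
    and Sd: "\<forall>S. proj_sub 3 S \<longrightarrow> n_in Ls S \<in> {0, 1, q + 1, 2 * q + 1}"
    and K: "K1 \<in> Ls" "K2 \<in> Ls" "K1 \<noteq> K2" and P: "proj_sub 0 P" "P \<subseteq> K1" "P \<subseteq> K2"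
    and N: "N \<in> Ls" "P \<subseteq> N"
  shows "N \<subseteq> J K1 K2"
proof (rule ccontr)
  assume nN: "\<not> N \<subseteq> J K1 K2"
  define \<pi> where "\<pi> = J K1 K2"
  define B where "B = J K1 N"
  define C where "C = J K2 N"
  define S where "S = J \<pi> N"
  have l1: "proj_sub 1 K1" "proj_sub 1 K2" "proj_sub 1 N" using lines K N by auto
  have pi: "proj_sub 2 \<pi>" unfolding \<pi>_def by (rule plane_of[OF l1(1,2) K(3) P])
  have "K1 \<subseteq> \<pi>" "K2 \<subseteq> \<pi>" unfolding \<pi>_def by (simp_all add: J_ge1 J_ge2)
  then have n1: "N \<noteq> K1" "N \<noteq> K2" using nN \<pi>_def by auto
  have pB: "proj_sub 2 B" unfolding B_def by (rule plane_of[OF l1(1,3)]) (use n1 P N in auto)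
  have pC: "proj_sub 2 C" unfolding C_def by (rule plane_of[OF l1(2,3)]) (use n1 P N in auto)
  have "vec.dim (N \<inter> \<pi>) < 2" using sub_lt[of N \<pi>] nN l1 pi \<pi>_def by (auto simp: proj_sub_def)
  moreover have "vec.dim P \<le> vec.dim (N \<inter> \<pi>)"
    using dim_mono'[of P "N \<inter> \<pi>"] P N \<open>K1 \<subseteq> \<pi>\<close> by auto
  ultimately have "vec.dim (N \<inter> \<pi>) = 1" using P by (auto simp: proj_sub_def)
  then have pS: "proj_sub 3 S" using J_dim[of \<pi> N] pi l1 by (auto simp: proj_sub_def S_def Int_commute)
  have sub: "\<pi> \<subseteq> S" "N \<subseteq> S" unfolding S_def by (simp_all add: J_ge1 J_ge2)
  have BS: "B \<subseteq> S" unfolding B_def using sub \<open>K1 \<subseteq> \<pi>\<close> by (intro J_min) (auto simp: S_def)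
  have CS: "C \<subseteq> S" unfolding C_def using sub \<open>K2 \<subseteq> \<pi>\<close> by (intro J_min) (auto simp: S_def)
  have NB: "N \<subseteq> B" "K1 \<subseteq> B" "N \<subseteq> C" "K2 \<subseteq> C" unfolding B_def C_def by (simp_all add: J_ge1 J_ge2)
  have piB: "\<pi> \<noteq> B" using NB nN \<pi>_def by auto
  have piC: "\<pi> \<noteq> C" using NB nN \<pi>_def by auto
  have BC: "B \<noteq> C"
  proof
    assume "B = C"
    then have "\<pi> \<subseteq> B" unfolding \<pi>_def using NB by (intro J_min) (auto simp: C_def)
    then have "\<pi> = B" using same_dim_eq[OF pi pB] by simp
    then show False using piB by simp
  qed
  have cpi: "card (lns Ls \<pi>) = q + 1" by (rule plane_cnt[OF Pl pi K]) fact+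
  have cB: "card (lns Ls B) = q + 1" by (rule plane_cnt[OF Pl pB K(1) N(1)]) (use n1 NB in auto)
  have cC: "card (lns Ls C) = q + 1" by (rule plane_cnt[OF Pl pC K(2) N(1)]) (use n1 NB in auto)
  have i1: "lns Ls \<pi> \<inter> lns Ls B \<subseteq> {K1}"
  proof
    fix X assume "X \<in> lns Ls \<pi> \<inter> lns Ls B"
    then have "X = K1" using two_planes[OF pi pB piB pS sub(1) BS l1(1) \<open>K1 \<subseteq> \<pi>\<close> NB(2)] lines
      by (auto simp: lns_def)
    then show "X \<in> {K1}" by simp
  qed
  have i2: "lns Ls \<pi> \<inter> lns Ls C \<subseteq> {K2}"
  proof
    fix X assume "X \<in> lns Ls \<pi> \<inter> lns Ls C"
    then have "X = K2" using two_planes[OF pi pC piC pS sub(1) CS l1(2) \<open>K2 \<subseteq> \<pi>\<close> NB(4)] lines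
      by (auto simp: lns_def)
    then show "X \<in> {K2}" by simp
  qed
  have i3: "lns Ls B \<inter> lns Ls C \<subseteq> {N}"
  proof
    fix X assume "X \<in> lns Ls B \<inter> lns Ls C"
    then have "X = N" using two_planes[OF pB pC BC pS BS CS l1(3) NB(1) NB(3)] lines
      by (auto simp: lns_def)
    then show "X \<in> {N}" by simp
  qed
  let ?A = "lns Ls \<pi>" and ?B = "lns Ls B" and ?C = "lns Ls C"
  have f: "finite ?A" "finite ?B" "finite ?C" by simp_all
  have "card (?A \<inter> ?B) \<le> 1" using card_mono[OF _ i1] by simp
  then have u1: "card (?A \<union> ?B) \<ge> 2 * q + 1"
    using card_Un_Int[OF f(1,2)] cpi cB by linarith
  have "(?A \<union> ?B) \<inter> ?C \<subseteq> {K2, N}" using i2 i3 by blast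
  then have "card ((?A \<union> ?B) \<inter> ?C) \<le> card {K2, N}" by (rule card_mono[rotated]) simp
  moreover have "card {K2, N} \<le> 2" by (simp add: card_insert_if)
  ultimately have "card ((?A \<union> ?B) \<inter> ?C) \<le> 2" by linarith
  then have u2: "card (?A \<union> ?B \<union> ?C) \<ge> 3 * q"
    using card_Un_Int[of "?A \<union> ?B" ?C] u1 cC by simp
  have "?A \<union> ?B \<union> ?C \<subseteq> lns Ls S" using sub BS CS by (auto simp: lns_def)
  then have "card (?A \<union> ?B \<union> ?C) \<le> card (lns Ls S)" by (rule card_mono[rotated]) simp
  moreover have "card (lns Ls S) \<in> {0, 1, q + 1, 2 * q + 1}" using Sd pS n_in_lns by metis
  then have "card (lns Ls S) \<le> 2 * q + 1" by auto
  ultimately show False using u2 q by linarith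
qed

lemma pen_eq:
  fixes Ls :: "('a::{field,finite} ^ 8) set set"
  assumes q: "q \<ge> 2" and lines: "\<forall>L\<in>Ls. proj_sub 1 L"
    and Pt: "\<forall>P. proj_sub 0 P \<longrightarrow> card {L \<in> Ls. P \<subseteq> L} \<in> {0, q + 1}"
    and Pl: "\<forall>S. proj_sub 2 S \<longrightarrow> n_in Ls S \<in> {0, 1, q + 1}"
    and Sd: "\<forall>S. proj_sub 3 S \<longrightarrow> n_in Ls S \<in> {0, 1, q + 1, 2 * q + 1}"
    and K: "K1 \<in> Ls" "K2 \<in> Ls" "K1 \<noteq> K2" and P: "proj_sub 0 P" "P \<subseteq> K1" "P \<subseteq> K2"
  shows "pen Ls P = lns Ls (J K1 K2)" "card (pen Ls P) = q + 1"
proof -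
  have sub: "pen Ls P \<subseteq> lns Ls (J K1 K2)"
    using flat[OF q lines Pl Sd K P] by (auto simp: pen_def lns_def)
  have "card (pen Ls P) \<in> {0, q + 1}" using Pt P by (simp add: pen_def)
  moreover have "card (pen Ls P) \<noteq> 0" using K P by (auto simp: pen_def)
  ultimately show c: "card (pen Ls P) = q + 1" by auto
  have "card (lns Ls (J K1 K2)) = q + 1"
    by (rule plane_cnt[OF Pl plane_of K(1,2,3)]) (use lines K P in \<open>auto simp: J_ge1 J_ge2\<close>)
  then show "pen Ls P = lns Ls (J K1 K2)" using card_subset_eq[OF _ sub] c by simp
qed

theorem mainTheorem18:
  fixes q :: nat and Ls :: "('a::{field,finite} ^ 8) set set"
  assumes card_F: "CARD('a) = q ^ 3"
    and lines: "\<forall>L\<in>Ls. proj_sub 1 L"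
    and Pt: "\<forall>P. proj_sub 0 P \<longrightarrow> card {L \<in> Ls. P \<subseteq> L} \<in> {0, q + 1}"
    and Pl: "\<forall>S. proj_sub 2 S \<longrightarrow> n_in Ls S \<in> {0, 1, q + 1}"
    and Sd: "\<forall>S. proj_sub 3 S \<longrightarrow> n_in Ls S \<in> {0, 1, q + 1, 2 * q + 1}"
    and D4: "\<forall>S. proj_sub 4 S \<longrightarrow> n_in Ls S \<le> q ^ 2 + 2 * q + 1"
  shows "\<not> (\<exists>L. (\<forall>i<5. L i \<in> Ls) \<and> pentagon L)"
proof
  assume "\<exists>L. (\<forall>i<5. L i \<in> Ls) \<and> pentagon L"
  then obtain L where inL: "\<forall>i<5. L i \<in> Ls" and pg: "pentagon L" by blast
  have q: "q \<ge> 2" using q_ge2[OF card_F] .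
  note PE = pen_eq[OF q lines Pt Pl Sd]
  have sdle: "card (lns Ls S) \<le> 2 * q + 1" if "proj_sub 3 S" for S
  proof -
    have "card (lns Ls S) \<in> {0, 1, q + 1, 2 * q + 1}" using Sd that n_in_lns by metis
    then show ?thesis by auto
  qed
  have sdge: "card (lns Ls S) = 2 * q + 1" if "proj_sub 3 S" "card (lns Ls S) \<ge> q + 2" for S
  proof -
    have "card (lns Ls S) \<in> {0, 1, q + 1, 2 * q + 1}" using Sd that n_in_lns by metis
    then show ?thesis using that by auto
  qed
  have sdge2: "card (lns Ls S) \<ge> q + 1" if "proj_sub 3 S" "card (lns Ls S) \<ge> 2" for S
  proof -
    have "card (lns Ls S) \<in> {0, 1, q + 1, 2 * q + 1}" using Sd that n_in_lns by metis
    then show ?thesis using that by auto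
  qed
  have pll: "\<forall>i<5. proj_sub 1 (L i)" and ppt: "\<forall>i<5. proj_sub 0 (L i \<inter> L (Suc i mod 5))"
    and inj: "inj_on (\<lambda>i. L i \<inter> L (Suc i mod 5)) {..<5}"
    using pg by (auto simp: pentagon_def)
  define a where "a = L 0"
  define b where "b = L 1"
  define c where "c = L 2"
  define d where "d = L 3"
  define e where "e = L 4"
  define P1 where "P1 = a \<inter> b"
  define P2 where "P2 = b \<inter> c"
  define P3 where "P3 = c \<inter> d"
  define P4 where "P4 = d \<inter> e"
  define P5 where "P5 = e \<inter> a"
  have Ls: "a \<in> Ls" "b \<in> Ls" "c \<in> Ls" "d \<in> Ls" "e \<in> Ls"
    using inL by (auto simp: a_def b_def c_def d_def e_def)
  have ln: "proj_sub 1 a" "proj_sub 1 b" "proj_sub 1 c" "proj_sub 1 d" "proj_sub 1 e"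
    using Ls lines by auto
  have pt: "proj_sub 0 P1" "proj_sub 0 P2" "proj_sub 0 P3" "proj_sub 0 P4" "proj_sub 0 P5"
    using ppt[rule_format, of 0] ppt[rule_format, of 1] ppt[rule_format, of 2]
      ppt[rule_format, of 3] ppt[rule_format, of 4]
    by (simp_all add: P1_def P2_def P3_def P4_def P5_def a_def b_def c_def d_def e_def numeral_2_eq_2)
  have f: "i = j" if "i < 5" "j < 5" "L i \<inter> L (Suc i mod 5) = L j \<inter> L (Suc j mod 5)" for i j
    using inj that unfolding inj_on_def by blast
  have dist: "P1 \<noteq> P2" "P2 \<noteq> P3" "P3 \<noteq> P4" "P4 \<noteq> P5" "P5 \<noteq> P1"
  proof -
    show "P1 \<noteq> P2" using f[of 0 1] by (auto simp: P1_def P2_def a_def b_def c_def numeral_2_eq_2)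
    show "P2 \<noteq> P3" using f[of 1 2] by (auto simp: P2_def P3_def d_def b_def c_def numeral_2_eq_2)
    show "P3 \<noteq> P4" using f[of 2 3] by (auto simp: P3_def P4_def d_def e_def c_def numeral_2_eq_2)
    show "P4 \<noteq> P5" using f[of 3 4] by (auto simp: P4_def P5_def d_def e_def a_def numeral_2_eq_2)
    show "P5 \<noteq> P1" using f[of 4 0] by (auto simp: P1_def P5_def b_def e_def a_def numeral_2_eq_2)
  qed
  have inc: "P1 \<subseteq> a" "P1 \<subseteq> b" "P2 \<subseteq> b" "P2 \<subseteq> c" "P3 \<subseteq> c" "P3 \<subseteq> d"
    "P4 \<subseteq> d" "P4 \<subseteq> e" "P5 \<subseteq> e" "P5 \<subseteq> a"
    by (auto simp: P1_def P2_def P3_def P4_def P5_def numeral_2_eq_2)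
  have ne: "X \<noteq> Y" if "proj_sub 1 X" "proj_sub 0 (X \<inter> Y)" for X Y
    using that by (auto simp: proj_sub_def)
  have neq: "a \<noteq> b" "b \<noteq> c" "c \<noteq> d" "d \<noteq> e" "e \<noteq> a"
    using ne[of a b] ne[of b c] ne[of c d] ne[of d e] ne[of e a] ln pt
    by (auto simp: P1_def P2_def P3_def P4_def P5_def numeral_2_eq_2)
  have meet: "P = Q" if "proj_sub 0 P" "proj_sub 0 Q" "P \<subseteq> X" "P \<subseteq> Y" "Q = X \<inter> Y" for P Q X Y
    using same_dim_eq[of 0 P Q] that by auto
  have nP1c: "\<not> P1 \<subseteq> c" using meet[OF pt(1) pt(2) inc(2) _ P2_def] dist by auto
  have nP3b: "\<not> P3 \<subseteq> b" using meet[OF pt(3) pt(2) _ inc(5) P2_def] dist by auto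
  have nP2d: "\<not> P2 \<subseteq> d" using meet[OF pt(2) pt(3) inc(4) _ P3_def] dist by auto
  have nP5d: "\<not> P5 \<subseteq> d" using meet[OF pt(5) pt(4) _ inc(9) P4_def] dist by auto
  have lb: "b = J P1 P2" by (rule line_pts[OF ln(2) pt(1,2) dist(1) inc(2,3)])
  have lc: "c = J P2 P3" by (rule line_pts[OF ln(3) pt(2,3) dist(2) inc(4,5)])
  have le: "e = J P4 P5" by (rule line_pts[OF ln(5) pt(4,5) dist(4) inc(8,9)])
  have la: "a = J P5 P1" by (rule line_pts[OF ln(1) pt(5,1) dist(5) inc(10,1)])
  define \<pi>1 where "\<pi>1 = J a b"
  define \<pi>2 where "\<pi>2 = J b c"
  define \<pi>3 where "\<pi>3 = J c d"
  define \<pi>5 where "\<pi>5 = J e a"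
  have pen1: "pen Ls P1 = lns Ls \<pi>1" "card (pen Ls P1) = q + 1"
    using PE[OF Ls(1,2) neq(1) pt(1) inc(1,2)] by (simp_all add: \<pi>1_def)
  have pen2: "pen Ls P2 = lns Ls \<pi>2" "card (pen Ls P2) = q + 1"
    using PE[OF Ls(2,3) neq(2) pt(2) inc(3,4)] by (simp_all add: \<pi>2_def)
  have pen3: "pen Ls P3 = lns Ls \<pi>3" "card (pen Ls P3) = q + 1"
    using PE[OF Ls(3,4) neq(3) pt(3) inc(5,6)] by (simp_all add: \<pi>3_def)
  have pen5: "pen Ls P5 = lns Ls \<pi>5" "card (pen Ls P5) = q + 1"
    using PE[OF Ls(5,1) neq(5) pt(5) inc(9,10)] by (simp_all add: \<pi>5_def)
  have pl1: "proj_sub 2 \<pi>1" unfolding \<pi>1_def by (rule plane_of[OF ln(1,2) neq(1) pt(1) inc(1,2)])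
  have pl3: "proj_sub 2 \<pi>3" unfolding \<pi>3_def by (rule plane_of[OF ln(3,4) neq(3) pt(3) inc(5,6)])
  have s1: "a \<subseteq> \<pi>1" "b \<subseteq> \<pi>1" "c \<subseteq> \<pi>3" "d \<subseteq> \<pi>3"
    by (simp_all add: \<pi>1_def \<pi>3_def J_ge1 J_ge2)
  define W where "W = J \<pi>1 \<pi>3"
  have WS[simp]: "vec.subspace W" by (simp add: W_def)
  have sW: "\<pi>1 \<subseteq> W" "\<pi>3 \<subseteq> W" by (simp_all add: W_def J_ge1 J_ge2)
  have P2in: "P2 \<subseteq> \<pi>1 \<inter> \<pi>3" using inc s1 by auto
  have dW: "vec.dim W + vec.dim (\<pi>1 \<inter> \<pi>3) = 6"
    using J_dim[of \<pi>1 \<pi>3] pl1 pl3 by (simp add: W_def proj_sub_def)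
  have "1 \<le> vec.dim (\<pi>1 \<inter> \<pi>3)" using dim_mono'[OF P2in] pt(2) by (simp add: proj_sub_def)
  have "\<not> \<pi>3 \<subseteq> \<pi>1"
  proof
    assume "\<pi>3 \<subseteq> \<pi>1"
    then have "c \<in> pen Ls P1" using pen1(1) s1 Ls by (auto simp: lns_def)
    then show False using nP1c by (simp add: pen_def)
  qed
  then have "vec.dim (\<pi>3 \<inter> \<pi>1) < 3" using sub_lt[of \<pi>3 \<pi>1] pl1 pl3 by (simp add: proj_sub_def)
  then have "vec.dim (\<pi>1 \<inter> \<pi>3) < 3" by (simp add: Int_commute)
  then have "vec.dim W = 4 \<or> vec.dim W = 5" using dW \<open>1 \<le> _\<close> by linarith
  then show False
  proof
    assume "vec.dim W = 4"
    then have pW: "proj_sub 3 W" by (simp add: proj_sub_def W_def)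
    have "pen Ls P1 \<union> pen Ls P3 \<subseteq> lns Ls W" using pen1 pen3 sW by (auto simp: lns_def)
    then have "card (pen Ls P1 \<union> pen Ls P3) \<le> 2 * q + 1"
      using card_mono[of "lns Ls W"] sdle[OF pW] by (meson fin le_trans)
    moreover have "pen Ls P1 \<inter> pen Ls P3 = {}"
    proof (rule ccontr)
      assume "pen Ls P1 \<inter> pen Ls P3 \<noteq> {}"
      then obtain N where N: "N \<in> Ls" "P1 \<subseteq> N" "P3 \<subseteq> N" by (auto simp: pen_def)
      have "N \<noteq> c" using N nP1c by auto
      then have "pen Ls P3 = lns Ls (J N c)" using PE(1)[OF N(1) Ls(3) _ pt(3) N(3) inc(5)] by simp
      moreover have "b \<subseteq> J N c" unfolding lb by (rule J_min) (use N(2) inc(4) J_ge1[of N c] J_ge2[of c N] in auto)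
      ultimately have "P3 \<subseteq> b" using Ls by (auto simp: pen_def lns_def)
      then show False using nP3b by simp
    qed
    ultimately show False using card_Un_disjoint[of "pen Ls P1" "pen Ls P3"] pen1 pen3 by simp
  next
    assume d5: "vec.dim W = 5"
    have pW: "proj_sub 4 W" using d5 by (simp add: proj_sub_def W_def)
    have "vec.dim (\<pi>1 \<inter> \<pi>3) = 1" using dW d5 by linarith
    then have I13: "P2 = \<pi>1 \<inter> \<pi>3"
      using eqdim[of P2 "\<pi>1 \<inter> \<pi>3"] P2in pt(2) pl1 pl3 vec.subspace_inter[of \<pi>1 \<pi>3]
      by (simp add: proj_sub_def)
    have nP1d: "\<not> P1 \<subseteq> d"
    proof
      assume "P1 \<subseteq> d"
      then have "P1 \<subseteq> P2" using I13 inc(1) s1 by auto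
      then show False using same_dim_eq[OF pt(1) pt(2)] dist by auto
    qed
    define T where "T K = J K d" for K
    define \<rho> where "\<rho> = J P1 d"
    have A1: "K \<in> Ls" "P1 \<subseteq> K" "K \<subseteq> \<pi>1" if "K \<in> pen Ls P1" for K
      using that pen1(1) by (auto simp: pen_def lns_def)
    have TS[simp]: "vec.subspace (T K)" for K by (simp add: T_def)
    have KT: "K \<subseteq> T K" "d \<subseteq> T K" for K by (simp_all add: T_def J_ge1 J_ge2)
    have sP2d: "vec.dim (P2 \<inter> d) < 1"
      using sub_lt[of P2 d] nP2d pt(2) ln(4) by (simp add: proj_sub_def)
    have pT: "proj_sub 3 (T K)" if "K \<in> pen Ls P1" for K
    proof -
      have "K \<inter> d \<subseteq> P2 \<inter> d" using I13 A1[OF that] s1 by auto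
      then have "vec.dim (K \<inter> d) = 0" using dim_mono'[of "K \<inter> d" "P2 \<inter> d"] sP2d by linarith
      moreover have "proj_sub 1 K" using A1[OF that] lines by auto
      ultimately show ?thesis using J_dim_disj[of 1 K 1 d 3] ln(4) by (simp add: T_def)
    qed
    have TW: "T K \<subseteq> W" if "K \<in> pen Ls P1" for K
      unfolding T_def by (rule J_min) (use A1[OF that] s1 sW in \<open>auto simp: W_def\<close>)
    have pr: "proj_sub 2 \<rho>"
    proof -
      have "vec.dim (P1 \<inter> d) < 1"
        using sub_lt[of P1 d] nP1d pt(1) ln(4) by (simp add: proj_sub_def)
      then have "vec.dim (P1 \<inter> d) = 0" by linarith
      then show ?thesis using J_dim_disj[of 0 P1 1 d 2] pt(1) ln(4) by (simp add: \<rho>_def)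
    qed
    have rT: "\<rho> \<subseteq> T K" if "K \<in> pen Ls P1" for K
      unfolding \<rho>_def by (rule J_min) (use A1[OF that] KT[of K] in \<open>auto simp: T_def\<close>)
    have ainA: "a \<in> pen Ls P1" "b \<in> pen Ls P1" using Ls inc by (auto simp: pen_def)
    have TT: "T K \<inter> T K' = \<rho>" if K: "K \<in> pen Ls P1" "K' \<in> pen Ls P1" "K \<noteq> K'" for K K'
    proof -
      have TN: "T K \<noteq> T K'"
      proof
        assume eq: "T K = T K'"
        have "pen Ls P1 = lns Ls (J K K')"
          using PE(1)[OF A1(1)[OF K(1)] A1(1)[OF K(2)] K(3) pt(1) A1(2)[OF K(1)] A1(2)[OF K(2)]] .
        then have ab: "a \<subseteq> J K K'" "b \<subseteq> J K K'" using ainA by (auto simp: lns_def)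
        have "J K K' \<subseteq> T K" by (rule J_min) (use KT[of K] KT[of K'] eq in auto)
        then have p1: "\<pi>1 \<subseteq> T K" unfolding \<pi>1_def using ab by (intro J_min) auto
        have "c \<subseteq> T K" unfolding lc by (rule J_min) (use p1 s1 inc KT[of K] in auto)
        then have "\<pi>3 \<subseteq> T K" unfolding \<pi>3_def using KT[of K] by (intro J_min) auto
        then have "W \<subseteq> T K" unfolding W_def using p1 by (intro J_min) auto
        then have "vec.dim W \<le> vec.dim (T K)" by (rule dim_mono')
        then show False using pT[OF K(1)] d5 by (simp add: proj_sub_def)
      qed
      have "\<not> T K' \<subseteq> T K" using same_dim_eq[OF pT[OF K(2)] pT[OF K(1)]] TN by auto
      then have lt: "vec.dim (T K' \<inter> T K) < 4" using sub_lt[of "T K'" "T K"] pT K by (simp add: proj_sub_def)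
      have "J (T K) (T K') \<subseteq> W" by (rule J_min) (use TW K in auto)
      then have "vec.dim (J (T K) (T K')) \<le> 5" using dim_mono' d5 by metis
      moreover have "vec.dim (J (T K) (T K')) + vec.dim (T K \<inter> T K') = 8"
        using J_dim[of "T K" "T K'"] pT K by (simp add: proj_sub_def)
      ultimately have "vec.dim (T K \<inter> T K') \<le> 3" using lt by (simp add: Int_commute)
      then show ?thesis using eqdim[of \<rho> "T K \<inter> T K'"] rT[OF K(1)] rT[OF K(2)] pr
          vec.subspace_inter[of "T K" "T K'"]
        by (simp add: proj_sub_def)
    qed
    have pi5a: "\<pi>5 \<subseteq> T a"
    proof -
      have "e \<subseteq> T a" unfolding le by (rule J_min) (use inc KT[of a] in auto)
      then show ?thesis unfolding \<pi>5_def by (rule J_min) (use KT[of a] in auto)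
    qed
    have lr: "lns Ls \<rho> = {d}"
    proof -
      have dr: "d \<in> lns Ls \<rho>" using Ls by (simp add: lns_def \<rho>_def J_ge2)
      have "card (lns Ls \<rho>) \<in> {0, 1, q + 1}" using Pl pr n_in_lns by metis
      moreover have "card (lns Ls \<rho>) \<noteq> q + 1"
      proof
        assume cq: "card (lns Ls \<rho>) = q + 1"
        have "pen Ls P5 \<union> lns Ls \<rho> \<subseteq> lns Ls (T a)"
          using pen5(1) pi5a rT[OF ainA(1)] by (auto simp: lns_def)
        then have "card (pen Ls P5 \<union> lns Ls \<rho>) \<le> card (lns Ls (T a))" by (rule card_mono[rotated]) simp
        moreover have "pen Ls P5 \<inter> lns Ls \<rho> = {}"
        proof (rule ccontr)
          assume "pen Ls P5 \<inter> lns Ls \<rho> \<noteq> {}"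
          then obtain X where "P5 \<subseteq> X" "X \<subseteq> \<rho>" by (auto simp: pen_def lns_def)
          then have "P5 \<subseteq> \<rho>" by auto
          then have "a \<subseteq> \<rho>" unfolding la by (rule J_min) (simp_all add: \<rho>_def J_ge1)
          then have "T a \<subseteq> \<rho>" unfolding T_def by (rule J_min) (simp_all add: \<rho>_def J_ge2)
          then have "vec.dim (T a) \<le> vec.dim \<rho>" by (rule dim_mono')
          then show False using pT[OF ainA(1)] pr by (simp add: proj_sub_def)
        qed
        ultimately show False using card_Un_disjoint[of "pen Ls P5" "lns Ls \<rho>"] pen5(2) cq
            sdle[OF pT[OF ainA(1)]] by simp
      qed
      moreover have "card (lns Ls \<rho>) \<noteq> 0" using dr by auto
      ultimately have "card (lns Ls \<rho>) = 1" by auto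
      then obtain x where "lns Ls \<rho> = {x}" by (rule card_1_singletonE)
      then show ?thesis using dr by auto
    qed
    have cT: "card (lns Ls (T K)) \<ge> q + 1" if K: "K \<in> pen Ls P1" for K
    proof -
      have "K \<noteq> d" using A1(2)[OF K] nP1d by auto
      have "card {K, d} \<le> card (lns Ls (T K))" by (rule card_mono) (use A1[OF K] KT[of K] Ls in \<open>auto simp: lns_def\<close>)
      then have "card (lns Ls (T K)) \<ge> 2" using \<open>K \<noteq> d\<close> by simp
      then show ?thesis using sdge2 pT[OF K] by blast
    qed
    have cTa: "card (lns Ls (T a)) = 2 * q + 1"
    proof -
      have "pen Ls P5 \<union> {d} \<subseteq> lns Ls (T a)" using pen5(1) pi5a KT[of a] Ls by (auto simp: lns_def)
      then have "card (pen Ls P5 \<union> {d}) \<le> card (lns Ls (T a))" by (rule card_mono[rotated]) simp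
      moreover have "d \<notin> pen Ls P5" using nP5d by (simp add: pen_def)
      ultimately have "card (lns Ls (T a)) \<ge> q + 2" using pen5(2) by simp
      then show ?thesis using sdge pT[OF ainA(1)] by blast
    qed
    have cTb: "card (lns Ls (T b)) = 2 * q + 1"
    proof -
      have "c \<subseteq> T b" unfolding lc by (rule J_min) (use inc KT[of b] in auto)
      then have "\<pi>2 \<subseteq> T b" unfolding \<pi>2_def by (rule J_min[rotated]) (use KT[of b] in auto)
      then have "pen Ls P2 \<union> {d} \<subseteq> lns Ls (T b)" using pen2(1) KT[of b] Ls by (auto simp: lns_def)
      then have "card (pen Ls P2 \<union> {d}) \<le> card (lns Ls (T b))" by (rule card_mono[rotated]) simp
      moreover have "d \<notin> pen Ls P2" using nP2d by (simp add: pen_def)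
      ultimately have "card (lns Ls (T b)) \<ge> q + 2" using pen2(2) by simp
      then show ?thesis using sdge pT[OF ainA(2)] by blast
    qed
    define F where "F K = lns Ls (T K) - {d}" for K
    define A where "A = pen Ls P1"
    have disj: "\<forall>K\<in>A. \<forall>K'\<in>A. K \<noteq> K' \<longrightarrow> F K \<inter> F K' = {}"
    proof (intro ballI impI)
      fix K K' assume "K \<in> A" "K' \<in> A" "K \<noteq> K'"
      then have "T K \<inter> T K' = \<rho>" using TT A_def by simp
      then have "F K \<inter> F K' \<subseteq> lns Ls \<rho> - {d}" by (auto simp: F_def lns_def)
      then show "F K \<inter> F K' = {}" using lr by auto
    qed
    have cU: "card (\<Union>(F ` A)) = (\<Sum>K\<in>A. card (F K))"
      by (rule card_UN_disjoint) (use disj in auto)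
    have cF: "card (F K) = card (lns Ls (T K)) - 1" for K
      unfolding F_def by (rule card_Diff_singleton) (use Ls KT in \<open>auto simp: lns_def\<close>)
    have "\<Union>(F ` A) \<subseteq> lns Ls W" using TW by (auto simp: F_def lns_def A_def)
    then have "card (\<Union>(F ` A)) \<le> card (lns Ls W)" by (rule card_mono[rotated]) simp
    moreover have "card (lns Ls W) \<le> q ^ 2 + 2 * q + 1" using D4 pW n_in_lns by metis
    moreover have "(\<Sum>K\<in>A. card (F K)) \<ge> 4 * q + (q - 1) * q"
    proof -
      have abA: "a \<in> A" "b \<in> A - {a}" using ainA neq A_def by auto
      have "(\<Sum>K\<in>A. card (F K)) = card (F a) + (\<Sum>K\<in>A - {a}. card (F K))"
        using sum.remove[OF _ abA(1)] by simp
      also have "(\<Sum>K\<in>A - {a}. card (F K)) = card (F b) + (\<Sum>K\<in>A - {a} - {b}. card (F K))"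
        using sum.remove[OF _ abA(2)] by simp
      finally have s: "(\<Sum>K\<in>A. card (F K)) = card (F a) + card (F b) + (\<Sum>K\<in>A - {a} - {b}. card (F K))"
        by simp
      have "card (A - {a} - {b}) = q - 1" using pen1(2) abA A_def by (simp add: card_Diff_singleton)
      moreover have "card (A - {a} - {b}) * q \<le> (\<Sum>K\<in>A - {a} - {b}. card (F K))"
      proof -
        have "q \<le> card (F K)" if "K \<in> A - {a} - {b}" for K
          using cT[of K] cF[of K] that A_def by force
        then show ?thesis using sum_bounded_below[of "A - {a} - {b}" q "\<lambda>K. card (F K)"] by simp
      qed
      ultimately show ?thesis using s cF[of a] cF[of b] cTa cTb by simp
    qed
    moreover have "q ^ 2 + 2 * q + 1 < 4 * q + (q - 1) * q"
    proof -
      obtain r where "q = r + 2" using q by (metis add.commute le_add_diff_inverse)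
      then show ?thesis by (simp add: power2_eq_square algebra_simps)
    qed
    ultimately show False using cU by linarith
  qed
qed

end
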